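(* Let $r,K,\mu$ satisfy Assumption 1, let $a_0:=\frac{\pi}{\sqrt{2(1-\mu)}}$ and $a>a_0$. Every positive solution $(w,m)\in C^0([-a,a])^2$ of the localized problem (P$_a$) with speed $c=0$ satisfies $$\max_{[-a_0,a_0]}(w+m)\ge \frac K2(1-\mu).$$
   Context: Assumption 1: $r\in(1,\infty)$, $\mu\in\left(0,\min\left(\frac r2,1-\frac1r,1-K,K\right)\right)$, $K\in\left(0,\min\left(1,\frac{r}{r-1}\left(1-\frac{\mu}{1-\mu}\right)\right)\right)$. $f_w(w,m):=w(1-(w+m))+\mu(m-w)$, $f_m(w,m):=rm\left(1-\frac{w+m}{K}\right)+\mu(w-m)$; $(w^*,m^* )$ is the unique solution in $(0,1)\times(0,K)$ of $f_w=f_m=0$. The localized problem (P$_a$) with speed $c$: $w,m\in C^0([-a,a])$ satisfy, in the weak sense on $(-a,a)$, $-cw'-w''=f_w(w,m)\chi_{w\ge0}\chi_{m\ge0}$, $-cm'-m''=f_m(w,m)\chi_{w\ge0}\chi_{m\ge0}$, with $w(-a)=w^*$, $m(-a)=m^*$, $w(a)=m(a)=0$. *)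

theory Defs
  imports "HOL-Analysis.Analysis"
begin

definition assumption1 :: "real \<Rightarrow> real \<Rightarrow> real \<Rightarrow> bool" where
  "assumption1 r K mu \<longleftrightarrow> 1 < r \<and> 0 < mu \<and> mu < r / 2 \<and> mu < 1 - 1 / r \<and> mu < 1 - K \<and> mu < K
     \<and> 0 < K \<and> K < 1 \<and> K < r / (r - 1) * (1 - mu / (1 - mu))"

definition f_w :: "real \<Rightarrow> real \<Rightarrow> real \<Rightarrow> real" where
  "f_w mu w m = w * (1 - (w + m)) + mu * (m - w)"

definition f_m :: "real \<Rightarrow> real \<Rightarrow> real \<Rightarrow> real \<Rightarrow> real \<Rightarrow> real" where
  "f_m r K mu w m = r * m * (1 - (w + m) / K) + mu * (w - m)"

definition chi :: "real \<Rightarrow> real \<Rightarrow> real" where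
  "chi w m = (if 0 \<le> w \<and> 0 \<le> m then 1 else 0)"

definition smooth_fun :: "(real \<Rightarrow> real) \<Rightarrow> bool" where
  "smooth_fun \<phi> \<longleftrightarrow> (\<forall>n x. ((deriv ^^ n) \<phi>) differentiable (at x))"

definition test_fun :: "real \<Rightarrow> (real \<Rightarrow> real) \<Rightarrow> bool" where
  "test_fun a \<phi> \<longleftrightarrow> smooth_fun \<phi> \<and> compact (closure {x. \<phi> x \<noteq> 0})
     \<and> closure {x. \<phi> x \<noteq> 0} \<subseteq> {-a<..<a}"

text \<open>u solves -c u' - u'' = F in the weak (distributional) sense on (-a,a).\<close>
definition weak_sol :: "real \<Rightarrow> real \<Rightarrow> (real \<Rightarrow> real) \<Rightarrow> (real \<Rightarrow> real) \<Rightarrow> bool" where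
  "weak_sol a c u F \<longleftrightarrow> (\<forall>\<phi>. test_fun a \<phi> \<longrightarrow>
     integral {-a..a} (\<lambda>x. u x * (c * deriv \<phi> x - deriv (deriv \<phi>) x)) = integral {-a..a} (\<lambda>x. F x * \<phi> x))"

definition solves_Pa :: "real \<Rightarrow> real \<Rightarrow> real \<Rightarrow> real \<Rightarrow> real \<Rightarrow> real \<Rightarrow> real
     \<Rightarrow> (real \<Rightarrow> real) \<Rightarrow> (real \<Rightarrow> real) \<Rightarrow> bool" where
  "solves_Pa r K mu ws ms a c w m \<longleftrightarrow>
     continuous_on {-a..a} w \<and> continuous_on {-a..a} m
     \<and> weak_sol a c w (\<lambda>x. f_w mu (w x) (m x) * chi (w x) (m x))
     \<and> weak_sol a c m (\<lambda>x. f_m r K mu (w x) (m x) * chi (w x) (m x))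
     \<and> w (-a) = ws \<and> m (-a) = ms \<and> w a = 0 \<and> m a = 0"

end

theory Submission
  imports Defs "HOL-Computational_Algebra.Polynomial"
begin


lemma smooth_class:
  assumes "P f" "\<And>g. P g \<Longrightarrow> (\<forall>x. g differentiable (at x)) \<and> P (deriv g)"
  shows "smooth_fun f"
proof -
  have "P ((deriv^^n) f)" for n by (induction n) (auto simp: assms)
  thus ?thesis unfolding smooth_fun_def using assms(2) by blast
qed

lemma smooth_diff: "smooth_fun f \<Longrightarrow> f differentiable (at x)"
  unfolding smooth_fun_def by (metis funpow_0)

lemma smooth_deriv: "smooth_fun f \<Longrightarrow> smooth_fun (deriv f)"
  unfolding smooth_fun_def by (metis funpow_Suc_right o_apply)

lemma smooth_from_deriv:
  assumes "\<And>x. f differentiable (at x)" "smooth_fun (deriv f)"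
  shows "smooth_fun f"
  unfolding smooth_fun_def
proof (intro allI)
  fix n x show "(deriv ^^ n) f differentiable at x"
    using assms unfolding smooth_fun_def by (cases n) (auto simp: funpow_Suc_right simp del: funpow.simps)
qed

lemma smooth_DERIV: "smooth_fun f \<Longrightarrow> (f has_real_derivative deriv f x) (at x)"
  using smooth_diff DERIV_deriv_iff_real_differentiable by blast

lemma deriv_eqI: "(\<And>x. (f has_real_derivative f' x) (at x)) \<Longrightarrow> deriv f = f'"
  by (intro ext DERIV_imp_deriv) auto

lemma smooth_const: "smooth_fun (\<lambda>x. c)"
  by (rule smooth_class[where P="\<lambda>g. \<exists>c. g = (\<lambda>x. c)"]) auto

lemma smooth_trig: "smooth_fun (\<lambda>x. A * cos (k*x) + B * sin (k*x))"
proof (rule smooth_class[where P="\<lambda>g. \<exists>A B. g = (\<lambda>x. A * cos (k*x) + B * sin (k*x))"])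
  fix g assume "\<exists>A B. g = (\<lambda>x. A * cos (k*x) + B * sin (k*x))"
  then obtain A B where g: "g = (\<lambda>x. A * cos (k*x) + B * sin (k*x))" by blast
  have d: "(g has_real_derivative (B*k) * cos (k*x) + (-A*k) * sin (k*x)) (at x)" for x
    unfolding g by (auto intro!: derivative_eq_intros simp: algebra_simps)
  have "deriv g = (\<lambda>x. (B*k) * cos (k*x) + (-A*k) * sin (k*x))" by (rule deriv_eqI[OF d])
  with d show "(\<forall>x. g differentiable (at x)) \<and> (\<exists>A B. deriv g = (\<lambda>x. A * cos (k*x) + B * sin (k*x)))"
    using real_differentiable_def by blast
qed auto

inductive prodc :: "(real \<Rightarrow> real) \<Rightarrow> bool" where
  "smooth_fun f \<Longrightarrow> smooth_fun g \<Longrightarrow> prodc (\<lambda>x. f x * g x)"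
| "prodc h1 \<Longrightarrow> prodc h2 \<Longrightarrow> prodc (\<lambda>x. h1 x + h2 x)"

lemma prodc_deriv: "prodc h \<Longrightarrow> \<exists>h'. (\<forall>x. (h has_real_derivative h' x) (at x)) \<and> prodc h'"
proof (induction rule: prodc.induct)
  case (1 f g)
  have "((\<lambda>x. f x * g x) has_real_derivative deriv f x * g x + f x * deriv g x) (at x)" for x
    using smooth_DERIV[OF 1(1)] smooth_DERIV[OF 1(2)] by (auto intro!: derivative_eq_intros)
  moreover have "prodc (\<lambda>x. deriv f x * g x + f x * deriv g x)"
    using 1 by (intro prodc.intros smooth_deriv)
  ultimately show ?case by (intro exI[of _ "\<lambda>x. deriv f x * g x + f x * deriv g x"]) auto
next
  case (2 h1 h2)
  then obtain d1 d2 where "\<forall>x. (h1 has_real_derivative d1 x) (at x)" "prodc d1"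
    "\<forall>x. (h2 has_real_derivative d2 x) (at x)" "prodc d2" by blast
  then show ?case by (intro exI[of _ "\<lambda>x. d1 x + d2 x"]) (auto intro!: derivative_eq_intros prodc.intros)
qed

lemma smooth_mult: "smooth_fun f \<Longrightarrow> smooth_fun g \<Longrightarrow> smooth_fun (\<lambda>x. f x * g x)"
proof (rule smooth_class[where P=prodc])
  fix h assume "prodc h"
  then obtain h' where h': "\<forall>x. (h has_real_derivative h' x) (at x)" "prodc h'" using prodc_deriv by blast
  have "deriv h = h'" using h'(1) by (intro deriv_eqI) auto
  moreover have "\<forall>x. h differentiable (at x)" using h'(1) unfolding real_differentiable_def by blast
  ultimately show "(\<forall>x. h differentiable (at x)) \<and> prodc (deriv h)" using h'(2) by simp
qed (auto intro: prodc.intros)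

inductive compc :: "(real \<Rightarrow> real) \<Rightarrow> (real \<Rightarrow> real) \<Rightarrow> bool" for f where
  "smooth_fun g \<Longrightarrow> smooth_fun p \<Longrightarrow> compc f (\<lambda>x. g (f x) * p x)"
| "compc f h1 \<Longrightarrow> compc f h2 \<Longrightarrow> compc f (\<lambda>x. h1 x + h2 x)"

lemma compc_deriv: "compc f h \<Longrightarrow> smooth_fun f \<Longrightarrow> \<exists>h'. (\<forall>x. (h has_real_derivative h' x) (at x)) \<and> compc f h'"
proof (induction rule: compc.induct)
  case (1 g p)
  have "((\<lambda>x. g (f x) * p x) has_real_derivative deriv g (f x) * (deriv f x * p x) + g (f x) * deriv p x) (at x)" for x
  proof -
    have "((\<lambda>x. g (f x)) has_real_derivative deriv g (f x) * deriv f x) (at x)"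
      using DERIV_chain2[OF smooth_DERIV[OF 1(1)] smooth_DERIV[OF 1(3)]] .
    then show ?thesis using smooth_DERIV[OF 1(2)] by (auto intro!: derivative_eq_intros simp: algebra_simps)
  qed
  moreover have "compc f (\<lambda>x. deriv g (f x) * (deriv f x * p x) + g (f x) * deriv p x)"
    using 1 by (intro compc.intros smooth_deriv smooth_mult) auto
  ultimately show ?case by (intro exI[of _ "\<lambda>x. deriv g (f x) * (deriv f x * p x) + g (f x) * deriv p x"]) auto
next
  case (2 h1 h2)
  then obtain d1 d2 where "\<forall>x. (h1 has_real_derivative d1 x) (at x)" "compc f d1"
    "\<forall>x. (h2 has_real_derivative d2 x) (at x)" "compc f d2" by blast
  then show ?case by (intro exI[of _ "\<lambda>x. d1 x + d2 x"]) (auto intro!: derivative_eq_intros compc.intros)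
qed

lemma smooth_comp: assumes "smooth_fun g" "smooth_fun f" shows "smooth_fun (\<lambda>x. g (f x))"
proof -
  have "smooth_fun (\<lambda>x. g (f x) * 1)"
  proof (rule smooth_class[where P="compc f"])
    fix h assume "compc f h"
    then obtain h' where h': "\<forall>x. (h has_real_derivative h' x) (at x)" "compc f h'" using compc_deriv assms by blast
    have "deriv h = h'" using h'(1) by (intro deriv_eqI) auto
    moreover have "\<forall>x. h differentiable (at x)" using h'(1) unfolding real_differentiable_def by blast
    ultimately show "(\<forall>x. h differentiable (at x)) \<and> compc f (deriv h)" using h'(2) by simp
  next
    show "compc f (\<lambda>x. g (f x) * 1)" by (rule compc.intros(1)[OF assms(1) smooth_const])
  qed
  then show ?thesis by simp
qed

lemma deriv_funpow_local:
  assumes "open U" "\<And>y. y \<in> U \<Longrightarrow> f y = g y"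
  shows "x \<in> U \<Longrightarrow> (deriv^^n) f x = (deriv^^n) g x"
proof (induction n arbitrary: x)
  case 0 then show ?case using assms by simp
next
  case (Suc n)
  have "eventually (\<lambda>y. (deriv^^n) f y = (deriv^^n) g y) (nhds x)"
  proof -
    have "\<forall>y\<in>U. (deriv^^n) f y = (deriv^^n) g y" using Suc.IH by blast
    then show ?thesis unfolding eventually_nhds using assms(1) Suc.prems by blast
  qed
  then show ?case by (simp add: deriv_cong_ev)
qed

lemma smooth_local:
  assumes "\<And>x. \<exists>U g. open U \<and> x \<in> U \<and> smooth_fun g \<and> (\<forall>y\<in>U. f y = g y)"
  shows "smooth_fun f"
  unfolding smooth_fun_def
proof (intro allI)
  fix n x
  obtain U g where U: "open U" "x \<in> U" "smooth_fun g" "\<forall>y\<in>U. f y = g y" using assms by blast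
  have e: "\<And>y. y \<in> U \<Longrightarrow> (deriv^^n) g y = (deriv^^n) f y"
    using deriv_funpow_local[OF U(1), of g f] U(4) by auto
  have "((deriv^^n) g has_real_derivative deriv ((deriv^^n) g) x) (at x)"
    using U(3) unfolding smooth_fun_def DERIV_deriv_iff_real_differentiable by blast
  then have "((deriv^^n) f has_real_derivative deriv ((deriv^^n) g) x) (at x)"
    by (rule has_field_derivative_transform_within_open[OF _ U(1,2) e])
  then show "(deriv ^^ n) f differentiable at x" unfolding real_differentiable_def by blast
qed



lemma pow_exp_lim:
  assumes d: "d > 0"
  shows "((\<lambda>t::real. t^i * exp (-d*t)) \<longlongrightarrow> 0) at_top"
proof -
  have lim: "((\<lambda>t. (d*t)^i / exp (d*t)) \<longlongrightarrow> 0) at_top"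
    using tendsto_power_div_exp_0[of i] filterlim_tendsto_pos_mult_at_top[OF tendsto_const d filterlim_ident]
    by (rule filterlim_compose)
  have "((\<lambda>t. (1/d^i) * ((d*t)^i / exp (d*t))) \<longlongrightarrow> (1/d^i) * 0) at_top"
    by (intro tendsto_mult tendsto_const lim)
  moreover have "(1/d^i) * ((d*t)^i / exp (d*t)) = t^i * exp (-d*t)" for t
    using d by (simp add: power_mult_distrib exp_minus field_simps)
  ultimately show ?thesis by simp
qed

lemma poly_exp_lim:
  assumes d: "d > 0"
  shows "((\<lambda>t::real. poly q t * exp (-d*t)) \<longlongrightarrow> 0) at_top"
proof -
  have "((\<lambda>t. \<Sum>i\<le>degree q. coeff q i * (t^i * exp (-d*t))) \<longlongrightarrow> 0) at_top"
    by (intro tendsto_null_sum tendsto_mult_right_zero pow_exp_lim d)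
  then show ?thesis by (simp add: poly_altdef sum_distrib_right mult.assoc)
qed

definition Gp :: "real \<Rightarrow> real poly \<Rightarrow> real \<Rightarrow> real" where
  "Gp d p t = (if -d < t then poly p (1/(t+d)) * exp (- d/(t+d)) else 0)"

definition Dp :: "real \<Rightarrow> real poly \<Rightarrow> real poly" where
  "Dp d p = [:0,0,1:] * (smult d p - pderiv p)"

lemma Gp_lim:
  assumes d: "d > 0"
  shows "(Gp d p \<longlongrightarrow> 0) (at (-d))"
proof (rule filterlim_split_at)
  show "(Gp d p \<longlongrightarrow> 0) (at_left (-d))"
  proof (rule tendsto_eventually)
    have "eventually (\<lambda>y. y < -d) (at_left (-d))"
      by (simp add: eventually_at_filter)
    then show "\<forall>\<^sub>F x in at_left (- d). Gp d p x = 0"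
      by (rule eventually_mono) (auto simp: Gp_def)
  qed
  have "((\<lambda>t. poly p t * exp (-d*t)) \<longlongrightarrow> 0) at_top" by (rule poly_exp_lim[OF d])
  then have "((\<lambda>x. poly p (inverse x) * exp (-d * inverse x)) \<longlongrightarrow> 0) (at_right 0)"
    by (simp add: filterlim_at_top_to_right)
  then have "((\<lambda>x. Gp d p (x + - d)) \<longlongrightarrow> 0) (at_right 0)"
    by (rule Lim_transform_eventually)
       (auto simp: Gp_def eventually_at_right_less divide_inverse
             intro!: eventually_mono[OF eventually_at_right_less[of 0]])
  then show "(Gp d p \<longlongrightarrow> 0) (at_right (-d))"
    by (simp add: filterlim_at_right_to_0[of _ _ "-d"])
qed

lemma Gp_deriv:
  assumes d: "d > 0"
  shows "(Gp d p has_real_derivative Gp d (Dp d p) t) (at t)"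
proof (cases "t = -d")
  case True
  have "((\<lambda>y. (Gp d p y - Gp d p (-d)) / (y - (-d))) \<longlongrightarrow> 0) (at (-d))"
  proof (rule Lim_transform_eventually[OF Gp_lim[OF d, of "pCons 0 p"]])
    show "\<forall>\<^sub>F x in at (- d). Gp d (pCons 0 p) x = (Gp d p x - Gp d p (- d)) / (x - - d)"
      by (auto simp: Gp_def eventually_at_filter)
  qed
  then show ?thesis using True by (simp add: has_field_derivative_iff Gp_def)
next
  case False
  show ?thesis
  proof (cases "t < -d")
    case True
    have z: "Gp d (Dp d p) t = 0" using True by (simp add: Gp_def)
    have "((\<lambda>x. 0) has_real_derivative 0) (at t)" by simp
    then show ?thesis unfolding z
      by (rule has_field_derivative_transform_within_open[of _ _ _ "{..< -d}"]) (use True in \<open>auto simp: Gp_def\<close>)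
  next
    case False2: False
    with False have tt: "-d < t" by simp
    define u where "u = t + d"
    have u: "u > 0" using tt u_def by simp
    have "((\<lambda>s. poly p (1/(s+d)) * exp (- d/(s+d))) has_real_derivative
       poly (pderiv p) (1/(t+d)) * (- 1 / (t+d)^2) * exp (- d/(t+d)) + poly p (1/(t+d)) * (exp (- d/(t+d)) * (d/(t+d)^2))) (at t)"
    proof -
      have d1: "((\<lambda>s. 1/(s+d)) has_real_derivative -1/(t+d)^2) (at t)"
        using u u_def by (auto intro!: derivative_eq_intros simp: power2_eq_square)
      have d2: "((\<lambda>s. poly p (1/(s+d))) has_real_derivative poly (pderiv p) (1/(t+d)) * (-1/(t+d)^2)) (at t)"
        by (rule DERIV_chain2[OF poly_DERIV d1])
      have d3: "((\<lambda>s. exp (- d/(s+d))) has_real_derivative exp (- d/(t+d)) * (d/(t+d)^2)) (at t)"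
        using u u_def by (auto intro!: derivative_eq_intros simp: power2_eq_square)
      show ?thesis using DERIV_mult[OF d2 d3] by (simp add: algebra_simps)
    qed
    moreover have "poly (pderiv p) (1/(t+d)) * (- 1 / (t+d)^2) * exp (- d/(t+d)) + poly p (1/(t+d)) * (exp (- d/(t+d)) * (d/(t+d)^2))
        = Gp d (Dp d p) t"
    proof -
      have pD: "poly (Dp d p) y = y^2 * (d * poly p y - poly (pderiv p) y)" for y
        by (simp add: Dp_def algebra_simps power2_eq_square)
      have e1: "- 1 / (t+d)^2 = - ((1/(t+d))^2)"
        by (simp add: power_divide)
      have e2: "d / (t+d)^2 = d * ((1/(t+d))^2)"
        by (simp add: power_divide)
      show ?thesis using tt unfolding e1 e2 by (simp add: Gp_def pD algebra_simps)
    qed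
    ultimately have "((\<lambda>s. poly p (1/(s+d)) * exp (- d/(s+d))) has_real_derivative Gp d (Dp d p) t) (at t)" by simp
    then show ?thesis
      by (rule has_field_derivative_transform_within_open[of _ _ _ "{-d<..}"]) (use tt in \<open>auto simp: Gp_def\<close>)
  qed
qed

lemma Gp_smooth: assumes d: "d > 0" shows "smooth_fun (Gp d p)"
proof (rule smooth_class[where P="\<lambda>g. \<exists>p. g = Gp d p"])
  fix g assume "\<exists>p. g = Gp d p"
  then obtain p where g: "g = Gp d p" by blast
  have "deriv g = Gp d (Dp d p)" unfolding g by (rule deriv_eqI[OF Gp_deriv[OF d]])
  then show "(\<forall>x. g differentiable (at x)) \<and> (\<exists>p. deriv g = Gp d p)"
    using Gp_deriv[OF d] g unfolding real_differentiable_def by blast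
qed auto



definition Sf :: "real \<Rightarrow> real \<Rightarrow> real" where
  "Sf d t = (if -d < t then (t+d) * exp (- d/(t+d)) else 0)"

lemma Sf_deriv:
  assumes d: "d > 0"
  shows "(Sf d has_real_derivative Gp d [:1,d:] t) (at t)"
proof (cases "t = -d")
  case True
  have pt: "Gp d [:1:] x = (Sf d x - Sf d (- d)) / (x - - d)" if "x \<noteq> -d" for x
  proof (cases "-d < x")
    case True
    then have "x + d \<noteq> 0" by simp
    then show ?thesis using True by (simp add: Gp_def Sf_def)
  next
    case False
    then show ?thesis by (simp add: Gp_def Sf_def)
  qed
  have ev: "\<forall>\<^sub>F x in at (- d). Gp d [:1:] x = (Sf d x - Sf d (- d)) / (x - - d)"
    unfolding eventually_at_filter by (rule always_eventually) (use pt in blast)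
  have lim: "((\<lambda>y. (Sf d y - Sf d (-d)) / (y - (-d))) \<longlongrightarrow> 0) (at (-d))"
    by (rule Lim_transform_eventually[OF Gp_lim[OF d, of "[:1:]"] ev])
  have z: "Gp d [:1,d:] t = 0" using True by (simp add: Gp_def)
  have "(Sf d has_field_derivative 0) (at (-d))"
    unfolding has_field_derivative_iff by (rule lim)
  then show ?thesis using True z by simp
next
  case False
  show ?thesis
  proof (cases "t < -d")
    case True
    have z: "Gp d [:1,d:] t = 0" using True by (simp add: Gp_def)
    have "((\<lambda>x. 0) has_real_derivative 0) (at t)" by simp
    then show ?thesis unfolding z
      by (rule has_field_derivative_transform_within_open[of _ _ _ "{..< -d}"]) (use True in \<open>auto simp: Sf_def\<close>)
  next
    case False2: False
    with False have tt: "-d < t" by simp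
    have d3: "((\<lambda>s. exp (- d/(s+d))) has_real_derivative exp (- d/(t+d)) * (d/(t+d)^2)) (at t)"
      using tt by (auto intro!: derivative_eq_intros simp: power2_eq_square)
    have d4: "((\<lambda>s. s + d) has_real_derivative 1) (at t)" by (auto intro!: derivative_eq_intros)
    have dm: "((\<lambda>s. (s+d) * exp (- d/(s+d))) has_real_derivative 1 * exp (- d/(t+d)) + (t+d) * (exp (- d/(t+d)) * (d/(t+d)^2))) (at t)"
      using DERIV_mult[OF d4 d3] by (simp add: algebra_simps)
    have eq: "1 * exp (- d/(t+d)) + (t+d) * (exp (- d/(t+d)) * (d/(t+d)^2)) = Gp d [:1,d:] t"
    proof -
      have q: "(t+d) * (d/(t+d)^2) = d * (1/(t+d))" using tt by (simp add: power2_eq_square)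
      have "(t+d) * (exp (- d/(t+d)) * (d/(t+d)^2)) = exp (- d/(t+d)) * ((t+d) * (d/(t+d)^2))"
        by (rule mult.left_commute)
      also have "\<dots> = exp (- d/(t+d)) * (d * (1/(t+d)))" unfolding q ..
      finally have "(t+d) * (exp (- d/(t+d)) * (d/(t+d)^2)) = exp (- d/(t+d)) * (d * (1/(t+d)))" .
      then show ?thesis using tt by (simp add: Gp_def distrib_left distrib_right)
    qed
    have "((\<lambda>s. (s+d) * exp (- d/(s+d))) has_real_derivative Gp d [:1,d:] t) (at t)"
      using dm unfolding eq .
    then show ?thesis
      by (rule has_field_derivative_transform_within_open[of _ _ _ "{-d<..}"]) (use tt in \<open>auto simp: Sf_def\<close>)
  qed
qed

lemma Sf_smooth: assumes d: "d > 0" shows "smooth_fun (Sf d)"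
proof (rule smooth_from_deriv)
  show "Sf d differentiable (at x)" for x using Sf_deriv[OF d] unfolding real_differentiable_def by blast
  have "deriv (Sf d) = Gp d [:1,d:]" by (rule deriv_eqI[OF Sf_deriv[OF d]])
  then show "smooth_fun (deriv (Sf d))" using Gp_smooth[OF d] by simp
qed

lemma S2_nonneg: assumes d: "d > 0" shows "0 \<le> Gp d (Dp d [:1,d:]) y"
proof -
  have "poly (Dp d [:1,d:]) x = d^2 * x^3" for x by (simp add: Dp_def pderiv_pCons algebra_simps power2_eq_square power3_eq_cube)
  then show ?thesis using d by (auto simp: Gp_def)
qed

lemma S1_bound: assumes d: "d > 0" shows "y * Gp d [:1,d:] y \<le> Sf d y"
proof (cases "-d < y")
  case True
  let ?e = "exp (- d/(y+d))"
  have u: "y + d > 0" using True by simp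
  have "y * (1 + d/(y+d)) \<le> y + d"
  proof -
    have "y * (1 + d/(y+d)) = y*(y + 2*d)/(y+d)" using u by (simp add: field_simps)
    also have "\<dots> \<le> y + d"
    proof -
      have "(y+d)*(y+d) - y*(y + 2*d) = d*d" by (simp add: algebra_simps)
      moreover have "d*d \<ge> 0" by simp
      ultimately have "y*(y + 2*d) \<le> (y+d)*(y+d)" by linarith
      then show ?thesis using u by (simp add: pos_divide_le_eq)
    qed
    finally show ?thesis .
  qed
  then have "y * (1 + d/(y+d)) * ?e \<le> (y + d) * ?e" by (intro mult_right_mono) auto
  then show ?thesis using True by (simp add: Gp_def Sf_def algebra_simps)
qed (simp add: Gp_def Sf_def)



definition psi :: "real \<Rightarrow> real \<Rightarrow> real \<Rightarrow> real" where
  "psi k d x = Sf d (cos (k*x))"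

definition P1 :: "real \<Rightarrow> real \<Rightarrow> real \<Rightarrow> real" where
  "P1 k d x = Gp d [:1,d:] (cos (k*x)) * (- (k * sin (k*x)))"

lemma psi_d1: assumes d: "d > 0" shows "(psi k d has_real_derivative P1 k d x) (at x)"
proof -
  have c: "((\<lambda>x. cos (k*x)) has_real_derivative (- (k * sin (k*x)))) (at x)"
    by (auto intro!: derivative_eq_intros)
  show ?thesis unfolding psi_def P1_def by (rule DERIV_chain2[OF Sf_deriv[OF d] c])
qed

lemma psi_deriv: assumes d: "d > 0" shows "deriv (psi k d) = P1 k d"
  by (rule deriv_eqI[OF psi_d1[OF d]])

lemma psi_d2: assumes d: "d > 0"
  shows "(P1 k d has_real_derivative
     Gp d (Dp d [:1,d:]) (cos (k*x)) * (- (k * sin (k*x))) * (- (k * sin (k*x))) + Gp d [:1,d:] (cos (k*x)) * (- (k * (cos (k*x) * k)))) (at x)"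
proof -
  have c: "((\<lambda>x. cos (k*x)) has_real_derivative (- (k * sin (k*x)))) (at x)"
    by (auto intro!: derivative_eq_intros)
  have s1: "((\<lambda>x. Gp d [:1,d:] (cos (k*x))) has_real_derivative Gp d (Dp d [:1,d:]) (cos (k*x)) * (- (k * sin (k*x)))) (at x)"
    by (rule DERIV_chain2[OF Gp_deriv[OF d] c])
  have s2: "((\<lambda>x. - (k * sin (k*x))) has_real_derivative (- (k * (cos (k*x) * k)))) (at x)"
    by (auto intro!: derivative_eq_intros)
  show ?thesis unfolding P1_def using DERIV_mult[OF s1 s2] by (simp add: algebra_simps)
qed

lemma psi_dd: assumes d: "d > 0"
  shows "deriv (deriv (psi k d)) x =
     Gp d (Dp d [:1,d:]) (cos (k*x)) * (- (k * sin (k*x))) * (- (k * sin (k*x))) + Gp d [:1,d:] (cos (k*x)) * (- (k * (cos (k*x) * k)))"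
  unfolding psi_deriv[OF d] by (rule DERIV_imp_deriv[OF psi_d2[OF d]])

lemma psi_ineq: assumes d: "d > 0" shows "- deriv (deriv (psi k d)) x \<le> k^2 * psi k d x"
proof -
  let ?y = "cos (k*x)"
  have "- deriv (deriv (psi k d)) x = k^2 * (?y * Gp d [:1,d:] ?y) - k^2 * (Gp d (Dp d [:1,d:]) ?y * (sin (k*x))^2)"
    unfolding psi_dd[OF d] by (simp add: algebra_simps power2_eq_square)
  also have "\<dots> \<le> k^2 * (?y * Gp d [:1,d:] ?y)"
    using S2_nonneg[OF d, of ?y] by simp
  also have "\<dots> \<le> k^2 * psi k d x"
    unfolding psi_def by (intro mult_left_mono S1_bound d) simp
  finally show ?thesis .
qed

lemma Sf_nonneg: "d > 0 \<Longrightarrow> 0 \<le> Sf d t"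
  by (simp add: Sf_def)

lemma psi_smooth: assumes d: "d > 0" shows "smooth_fun (psi k d)"
proof -
  have "smooth_fun (\<lambda>x. Sf d (1 * cos (k*x) + 0 * sin (k*x)))"
    by (rule smooth_comp[OF Sf_smooth[OF d] smooth_trig])
  then show ?thesis unfolding psi_def by simp
qed

definition phi :: "real \<Rightarrow> real \<Rightarrow> real \<Rightarrow> real \<Rightarrow> real" where
  "phi L k d x = (if \<bar>x\<bar> \<le> L then psi k d x else 0)"

lemma deriv_zero_fun: "deriv (\<lambda>x::real. 0::real) = (\<lambda>x. 0)"
  by (rule deriv_eqI) simp

lemma phi_props:
  assumes d: "d > 0" and L: "0 < L" and k: "0 < k" and Lk: "L < pi/k"
    and hcos: "\<And>y. L \<le> \<bar>y\<bar> \<Longrightarrow> \<bar>y\<bar> \<le> pi/k \<Longrightarrow> cos (k*y) \<le> -d"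
  shows "smooth_fun (phi L k d)" "\<And>x. - deriv (deriv (phi L k d)) x \<le> k^2 * phi L k d x"
    "\<And>x. 0 \<le> phi L k d x" "0 < phi L k d 0" "\<And>x. L < \<bar>x\<bar> \<Longrightarrow> phi L k d x = 0"
proof -
  let ?U1 = "{-(pi/k)<..<pi/k}" and ?U2 = "- {-L..L}"
  have o1: "open ?U1" and o2: "open ?U2" by auto
  have e1: "phi L k d y = psi k d y" if "y \<in> ?U1" for y
  proof (cases "\<bar>y\<bar> \<le> L")
    case False
    then have "cos (k*y) \<le> -d" using that by (intro hcos) auto
    then show ?thesis using False by (simp add: phi_def psi_def Sf_def)
  qed (simp add: phi_def)
  have e2: "phi L k d y = 0" if "y \<in> ?U2" for y using that by (auto simp: phi_def)
  have cover: "x \<in> ?U1 \<or> x \<in> ?U2" for x using Lk by auto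
  show "smooth_fun (phi L k d)"
  proof (rule smooth_local)
    fix x
    show "\<exists>U g. open U \<and> x \<in> U \<and> smooth_fun g \<and> (\<forall>y\<in>U. phi L k d y = g y)"
    proof (cases "x \<in> ?U1")
      case True then show ?thesis using o1 e1 psi_smooth[OF d] by blast
    next
      case False then have "x \<in> ?U2" using cover by blast
      then show ?thesis using o2 e2 smooth_const[of 0] by blast
    qed
  qed
  show "- deriv (deriv (phi L k d)) x \<le> k^2 * phi L k d x" for x
  proof (cases "x \<in> ?U1")
    case True
    have "(deriv^^2) (phi L k d) x = (deriv^^2) (psi k d) x"
      by (rule deriv_funpow_local[OF o1 e1 True])
    then show ?thesis using psi_ineq[OF d, of k x] e1[OF True] by (simp add: numeral_2_eq_2)
  next
    case False then have x2: "x \<in> ?U2" using cover by blast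
    have "(deriv^^2) (phi L k d) x = (deriv^^2) (\<lambda>x. 0) x"
      by (rule deriv_funpow_local[OF o2 e2 x2])
    then show ?thesis using e2[OF x2] by (simp add: numeral_2_eq_2 deriv_zero_fun)
  qed
  show "0 \<le> phi L k d x" for x using Sf_nonneg[OF d] by (simp add: phi_def psi_def)
  show "0 < phi L k d 0" using L d by (simp add: phi_def psi_def Sf_def)
  show "L < \<bar>x\<bar> \<Longrightarrow> phi L k d x = 0" for x by (simp add: phi_def)
qed



lemma smooth_cont: "smooth_fun f \<Longrightarrow> continuous_on S ((deriv^^n) f)"
  by (intro differentiable_imp_continuous_on differentiable_at_imp_differentiable_on)
     (auto simp: smooth_fun_def)

lemma phi_test:
  assumes d: "d > 0" and L: "0 < L" and k: "0 < k" and Lk: "L < pi/k" and La: "L < a"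
    and hcos: "\<And>y. L \<le> \<bar>y\<bar> \<Longrightarrow> \<bar>y\<bar> \<le> pi/k \<Longrightarrow> cos (k*y) \<le> -d"
  shows "test_fun a (phi L k d)"
proof -
  have sub: "{x. phi L k d x \<noteq> 0} \<subseteq> {-L..L}"
    using phi_props(5)[OF d L k Lk hcos] by force
  have cl: "closure {x. phi L k d x \<noteq> 0} \<subseteq> {-L..L}"
    by (rule closure_minimal[OF sub]) simp
  have "compact (closure {x. phi L k d x \<noteq> 0})"
    unfolding compact_eq_bounded_closed using cl bounded_subset[OF compact_imp_bounded[OF compact_Icc]] by auto
  moreover have "closure {x. phi L k d x \<noteq> 0} \<subseteq> {-a<..<a}" using cl La by auto
  ultimately show ?thesis unfolding test_fun_def using phi_props(1)[OF d L k Lk hcos] by blast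
qed

theorem mainTheorem7:
  fixes r K mu ws ms a :: real and w m :: "real \<Rightarrow> real"
  assumes A1: "assumption1 r K mu"
    and eq_star: "0 < ws" "ws < 1" "0 < ms" "ms < K" "f_w mu ws ms = 0" "f_m r K mu ws ms = 0"
    and a_big: "a > pi / sqrt (2 * (1 - mu))"
    and sol: "solves_Pa r K mu ws ms a 0 w m"
    and pos: "\<forall>x\<in>{-a<..<a}. 0 < w x \<and> 0 < m x"
  shows "(SUP x\<in>{- (pi / sqrt (2 * (1 - mu)))..pi / sqrt (2 * (1 - mu))}. w x + m x) \<ge> K / 2 * (1 - mu)"
proof (rule ccontr)
  define L where "L = pi / sqrt (2 * (1 - mu))"
  define S where "S = (SUP x\<in>{-L..L}. w x + m x)"
  assume "\<not> ?thesis"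
  then have Sb: "S < K / 2 * (1 - mu)" unfolding S_def L_def by simp
  have K0: "0 < K" "K < 1" and mu0: "0 < mu" "mu < 1" using A1 unfolding assumption1_def by auto
  have s2: "sqrt (2 * (1 - mu)) > 0" using mu0 by simp
  have L0: "0 < L" unfolding L_def using s2 by simp
  have La: "L < a" using a_big L_def by simp
  have L2: "L^2 = pi^2 / (2 * (1 - mu))" unfolding L_def using mu0 by (simp add: power_divide)
  define e where "e = 1 - K"
  have e0: "0 < e" "e < 1" using K0 e_def by auto
  define al where "al = pi * e / 8"
  define k where "k = (pi/2 + al) / L"
  define d where "d = sin al"
  define c1 where "c1 = (1 - mu) * (1 - K/2)"
  have al0: "0 < al" "al < pi/2" unfolding al_def using e0 pi_gt_zero by (auto simp: field_simps)
  have d0: "d > 0" unfolding d_def using al0 by (intro sin_gt_zero) auto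
  have k0: "k > 0" unfolding k_def using al0 L0 by simp
  have kL: "k * L = pi/2 + al" unfolding k_def using L0 by simp
  have Lk: "L < pi / k" using kL k0 al0 by (simp add: field_simps)
  have hcos: "cos (k*y) \<le> -d" if "L \<le> \<bar>y\<bar>" "\<bar>y\<bar> \<le> pi/k" for y
  proof -
    have "cos (k*y) = cos (k * \<bar>y\<bar>)" by (cases "y \<ge> 0") auto
    also have "\<dots> \<le> cos (pi/2 + al)"
    proof (rule cos_monotone_0_pi_le)
      show "0 \<le> pi/2 + al" using al0 by simp
      show "pi/2 + al \<le> k * \<bar>y\<bar>" using that(1) k0 kL by (metis mult_left_mono less_imp_le)
      show "k * \<bar>y\<bar> \<le> pi" using that(2) k0 by (simp add: field_simps)
    qed
    also have "\<dots> = -d" unfolding d_def by (simp add: cos_add)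
    finally show ?thesis .
  qed
  have k2: "k^2 < c1"
  proof -
    have "k^2 = (pi/2 + al)^2 / L^2" unfolding k_def by (simp add: power_divide)
    also have "\<dots> = (1 - mu) * (1 + e/4)^2 / 2"
      unfolding L2 al_def using mu0 pi_gt_zero by (simp add: field_simps power2_eq_square)
    also have "\<dots> < (1 - mu) * (1 + e) / 2"
    proof -
      have "(1 + e/4)^2 < 1 + e" using e0 by (simp add: power2_eq_square field_simps)
      then have "(1 - mu) * (1 + e/4)^2 < (1 - mu) * (1 + e)"
        by (rule mult_strict_left_mono) (use mu0 in simp)
      then show ?thesis by (simp add: divide_strict_right_mono)
    qed
    also have "\<dots> = c1" unfolding c1_def e_def by (simp add: field_simps)
    finally show ?thesis .
  qed
  define ph where "ph = phi L k d"
  note pp = phi_props[OF d0 L0 k0 Lk hcos, folded ph_def]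
  have tf: "test_fun a ph" unfolding ph_def by (rule phi_test[OF d0 L0 k0 Lk La hcos])
  have cw: "continuous_on {-a..a} w" and cm: "continuous_on {-a..a} m"
    and ws: "weak_sol a 0 w (\<lambda>x. f_w mu (w x) (m x) * chi (w x) (m x))"
    and bd: "w (-a) = ws" "m (-a) = ms" "w a = 0" "m a = 0"
    using sol unfolding solves_Pa_def by auto
  have weq: "integral {-a..a} (\<lambda>x. w x * (0 * deriv ph x - deriv (deriv ph) x))
      = integral {-a..a} (\<lambda>x. f_w mu (w x) (m x) * chi (w x) (m x) * ph x)"
    using ws tf unfolding weak_sol_def by blast
  have wnn: "0 \<le> w x" "0 \<le> m x" if "x \<in> {-a..a}" for x
  proof -
    have "x = -a \<or> x = a \<or> x \<in> {-a<..<a}" using that by auto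
    moreover have "x \<in> {-a<..<a} \<Longrightarrow> 0 < w x \<and> 0 < m x" using pos by blast
    ultimately show "0 \<le> w x" "0 \<le> m x" using bd eq_star by (auto simp: less_imp_le)
  qed
  have chi1: "chi (w x) (m x) = 1" if "x \<in> {-a..a}" for x using wnn[OF that] by (simp add: chi_def)
  have cph: "continuous_on {-a..a} ph" "continuous_on {-a..a} (deriv ph)" "continuous_on {-a..a} (deriv (deriv ph))"
    using smooth_cont[OF pp(1), of _ 0] smooth_cont[OF pp(1), of _ 1] smooth_cont[OF pp(1), of _ 2]
    by (auto simp: numeral_2_eq_2)
  have int1: "(\<lambda>x. w x * (0 * deriv ph x - deriv (deriv ph) x)) integrable_on {-a..a}"
    by (intro integrable_continuous_interval continuous_intros cw cph)
  have cwp: "continuous_on {-a..a} (\<lambda>x. w x * ph x)" by (intro continuous_intros cw cph)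
  have int2: "(\<lambda>x. k^2 * (w x * ph x)) integrable_on {-a..a}"
    by (intro integrable_continuous_interval continuous_intros cw cph)
  have int3: "(\<lambda>x. c1 * (w x * ph x)) integrable_on {-a..a}"
    by (intro integrable_continuous_interval continuous_intros cw cph)
  have int4': "(\<lambda>x. f_w mu (w x) (m x) * ph x) integrable_on {-a..a}"
    unfolding f_w_def by (intro integrable_continuous_interval continuous_intros cw cm cph)
  have int4: "(\<lambda>x. f_w mu (w x) (m x) * chi (w x) (m x) * ph x) integrable_on {-a..a}"
    by (rule integrable_eq[OF int4']) (simp add: chi1)
  have le1: "integral {-a..a} (\<lambda>x. w x * (0 * deriv ph x - deriv (deriv ph) x)) \<le> integral {-a..a} (\<lambda>x. k^2 * (w x * ph x))"
  proof (rule integral_le[OF int1 int2])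
    fix x assume x: "x \<in> {-a..a}"
    have "w x * (- deriv (deriv ph) x) \<le> w x * (k^2 * ph x)"
      by (rule mult_left_mono[OF pp(2) wnn(1)[OF x]])
    then show "w x * (0 * deriv ph x - deriv (deriv ph) x) \<le> k^2 * (w x * ph x)" by (simp add: algebra_simps)
  qed
  have le2: "integral {-a..a} (\<lambda>x. c1 * (w x * ph x)) \<le> integral {-a..a} (\<lambda>x. f_w mu (w x) (m x) * chi (w x) (m x) * ph x)"
  proof (rule integral_le[OF int3 int4])
    fix x assume x: "x \<in> {-a..a}"
    show "c1 * (w x * ph x) \<le> f_w mu (w x) (m x) * chi (w x) (m x) * ph x"
    proof (cases "\<bar>x\<bar> \<le> L")
      case False then show ?thesis using pp(5)[of x] by simp
    next
      case True
      then have xL: "x \<in> {-L..L}" by auto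
      have bdd: "bdd_above ((\<lambda>x. w x + m x) ` {-L..L})"
      proof (rule bounded_imp_bdd_above, rule compact_imp_bounded, rule compact_continuous_image)
        show "continuous_on {-L..L} (\<lambda>x. w x + m x)"
          by (rule continuous_on_subset[of "{-a..a}"]) (use La in \<open>auto intro!: continuous_intros cw cm\<close>)
      qed simp
      have "w x + m x \<le> S" unfolding S_def by (rule cSUP_upper[OF xL bdd])
      then have n: "w x + m x \<le> K / 2 * (1 - mu)" using Sb by simp
      have wx: "0 \<le> w x" "0 \<le> m x" using wnn[OF x] by auto
      have "c1 \<le> 1 - (w x + m x) - mu" using n unfolding c1_def by (simp add: algebra_simps)
      then have "w x * c1 \<le> w x * (1 - (w x + m x) - mu)" by (rule mult_left_mono[OF _ wx(1)])
      also have "\<dots> \<le> f_w mu (w x) (m x)" unfolding f_w_def using wx mu0 by (simp add: algebra_simps)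
      finally have "w x * c1 \<le> f_w mu (w x) (m x)" .
      then have "w x * c1 * ph x \<le> f_w mu (w x) (m x) * ph x" by (rule mult_right_mono[OF _ pp(3)])
      then show ?thesis using chi1[OF x] by (simp add: algebra_simps)
    qed
  qed
  define J where "J = integral {-a..a} (\<lambda>x. w x * ph x)"
  have a0: "0 < a" using L0 La by simp
  have J0: "J > 0"
  proof -
    have nn: "\<And>x. x \<in> {-a..a} \<Longrightarrow> 0 \<le> w x * ph x" using wnn pp(3) by simp
    have "0 \<le> J" unfolding J_def by (rule integral_nonneg[OF integrable_continuous_interval[OF cwp] nn])
    moreover have "J \<noteq> 0"
    proof
      assume "J = 0"
      then have "\<forall>x\<in>{-a..a}. w x * ph x = 0"
        using integral_eq_0_iff[OF cwp _ nn] a0 unfolding J_def by simp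
      moreover have "0 < w 0 * ph 0" using pos a0 pp(4) by simp
      moreover have "(0::real) \<in> {-a..a}" using a0 by simp
      ultimately show False by (metis less_irrefl)
    qed
    ultimately show ?thesis by simp
  qed
  have "c1 * J \<le> k^2 * J"
    using le1 le2 weq unfolding J_def integral_mult[OF integrable_continuous_interval[OF cwp], symmetric]
    by linarith
  then have "c1 \<le> k^2" using J0 by simp
  then show False using k2 by simp
qed


end
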